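(* Let $N_T\geq 1$ be an integer, let $m=2(N_T+2)$ and $n=N_T+2+m$. Let $\tilde A_0,\tilde A_1,\dots,\tilde A_{N_T},\tilde\gamma_0,\tilde\gamma_1,\dots,\tilde\gamma_{N_T+1}$ be arbitrary real numbers and let $r\in\mathbb{R}$, $r\neq 0$. Then there exist $\gamma>0$ and a unitary $n\times n$ complex matrix $M=(M_{i,j})_{i,j=0}^{n-1}$ of the following form: with $A_j:=\gamma\tilde A_j$ ($0\le j\le N_T$) and $\gamma_i:=\gamma\tilde\gamma_i$ ($0\le i\le N_T+1$), - $M_{0,j}=A_j$ for $0\le j\le N_T$; - for $0\le k\le N_T$ and $0\le j\le N_T$: $M_{k+1,j}=0$ if $j=k$, and $M_{k+1,j}=-r\,A_j$ if $j\neq k$; - $M_{i,N_T+1}=\gamma_i$ for $0\le i\le N_T+1$; - all remaining entries (those with $i\geq N_T+2$ or $j\geq N_T+2$) are unconstrained complex numbers.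
   Context: Interpretation: rows/columns $0,1,\dots,N_T+1$ correspond to the basis states $|E\rangle,|\tau_0\rangle,\dots,|\tau_{N_T}\rangle$ of a clock and the last $m$ indices to stationary ancilla states $|A_1\rangle,\dots,|A_m\rangle$; the prescribed entries encode the conditions that the outcomes corresponding to $A_0,\dots,A_{N_T}$ are counterfactual outcomes, with $r=\cos\theta/\sin\theta$ and probabilities $|\cos\theta\, A_l|^2$. The proposition asserts existence of such a counterfactual clock with $m=2(N_T+2)$ ancillas for arbitrarily many distinguishable times. *)

theory Defs
  imports "HOL-Analysis.Analysis"
begin

text \<open>An n x n complex matrix represented as a function on indices 0..n-1
  (entries outside that range are irrelevant). Unitary: M M^* = I and M^* M = I.\<close>
definition unitary_fn :: "nat \<Rightarrow> (nat \<Rightarrow> nat \<Rightarrow> complex) \<Rightarrow> bool" where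
  "unitary_fn n M \<longleftrightarrow>
     (\<forall>i<n. \<forall>j<n. (\<Sum>k<n. M i k * cnj (M j k)) = (if i = j then 1 else 0)) \<and>
     (\<forall>i<n. \<forall>j<n. (\<Sum>k<n. cnj (M k i) * M k j) = (if i = j then 1 else 0))"

end

theory Submission
  imports Defs
begin


lemma sum_add_split: "(\<Sum>k<m+n. f k) = (\<Sum>k<m. f k) + (\<Sum>k<n. f (m+k::nat)) "
  by (induction n) (auto simp: add.assoc)

lemma sum_delta_l: "(\<Sum>k<(n::nat). (if k = a then 1 else 0) * f k) = (if a < n then f a else (0::real))"
proof -
  have "(\<Sum>k<n. (if k = a then 1 else 0) * f k) = (\<Sum>k<n. if k = a then f a else 0)" by (rule sum.cong) auto
  also have "\<dots> = (if a < n then f a else 0)" by (subst sum.delta) auto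
  finally show ?thesis .
qed
lemma sum_delta_r: "(\<Sum>k<(n::nat). f k * (if k = a then 1 else 0)) = (if a < n then f a else (0::real))"
proof -
  have "(\<Sum>k<n. f k * (if k = a then 1 else 0)) = (\<Sum>k<n. if k = a then f a else 0)" by (rule sum.cong) auto
  also have "\<dots> = (if a < n then f a else 0)" by (subst sum.delta) auto
  finally show ?thesis .
qed

lemma dilation:
  fixes V :: "nat \<Rightarrow> nat \<Rightarrow> real"
  assumes iso: "\<forall>a<p. \<forall>b<p. (\<Sum>k<n. V k a * V k b) = (if a = b then 1 else 0)"
  defines "P \<equiv> \<lambda>i j. \<Sum>l<p. V i l * V j l"
  defines "R \<equiv> \<lambda>i j. if j < p then (if i < n then V i j else 0)
      else (if i < n then (if i = j - p then 1 else 0) - P i (j - p) else V (j - p) (i - n))"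
  shows "\<forall>i<n+p. \<forall>j<n+p. (\<Sum>k<n+p. R i k * R j k) = (if i=j then 1 else 0)"
    and "\<forall>i<n+p. \<forall>j<n+p. (\<Sum>k<n+p. R k i * R k j) = (if i=j then 1 else 0)"
proof -
  have Psym: "P i j = P j i" for i j unfolding P_def by (simp add: mult.commute)
  have PV: "(\<Sum>k<n. P i k * V k j) = V i j" if "j < p" for i j
  proof -
    have "(\<Sum>k<n. P i k * V k j) = (\<Sum>k<n. \<Sum>l<p. V i l * (V k l * V k j))"
      unfolding P_def by (simp add: sum_distrib_right mult.assoc)
    also have "\<dots> = (\<Sum>l<p. V i l * (\<Sum>k<n. V k l * V k j))"
      by (subst sum.swap) (simp add: sum_distrib_left)
    also have "\<dots> = (\<Sum>l<p. V i l * (if l = j then 1 else 0))"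
      using iso that by (intro sum.cong) auto
    also have "\<dots> = V i j" using that by (simp add: sum_delta_r)
    finally show ?thesis .
  qed
  have VP: "(\<Sum>k<n. V k j * P k i) = V i j" if "j < p" for i j
    using PV[OF that, of i] by (simp add: Psym mult.commute)
  have PP: "(\<Sum>k<n. P i k * P j k) = P i j" for i j
  proof -
    have "(\<Sum>k<n. P i k * P j k) = (\<Sum>k<n. \<Sum>l<p. V i l * (V k l * P j k))"
      by (simp add: P_def sum_distrib_right mult.assoc)
    also have "\<dots> = (\<Sum>l<p. V i l * (\<Sum>k<n. V k l * P k j))"
      by (subst sum.swap) (simp add: sum_distrib_left Psym)
    also have "\<dots> = (\<Sum>l<p. V i l * V j l)"
      using VP by (intro sum.cong) auto
    finally show ?thesis unfolding P_def .
  qed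
  have split: "(\<Sum>k<n+p. f k) = (\<Sum>k<p. f k) + (\<Sum>k<n. f (p+k))" for f :: "nat \<Rightarrow> real"
    using sum_add_split[of f p n] by (simp add: add.commute)
  have split2: "(\<Sum>k<n+p. f k) = (\<Sum>k<n. f k) + (\<Sum>k<p. f (n+k))" for f :: "nat \<Rightarrow> real"
    using sum_add_split[of f n p] by simp
  show "\<forall>i<n+p. \<forall>j<n+p. (\<Sum>k<n+p. R i k * R j k) = (if i=j then 1 else 0)"
  proof (intro allI impI)
    fix i j assume i: "i < n+p" and j: "j < n+p"
    have row: "(\<Sum>k<n+p. R i k * R j k) = (\<Sum>k<p. R i k * R j k) + (\<Sum>k<n. R i (p+k) * R j (p+k))"
      by (rule split)
    show "(\<Sum>k<n+p. R i k * R j k) = (if i=j then 1 else 0)"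
    proof (cases "i < n")
      case iT: True
      show ?thesis
      proof (cases "j < n")
        case jT: True
        have "(\<Sum>k<n. R i (p+k) * R j (p+k)) = (\<Sum>k<n. ((if i = k then 1 else 0) - P i k) * ((if j = k then 1 else 0) - P j k))"
          using iT jT by (intro sum.cong) (auto simp: R_def)
        also have "\<dots> = (\<Sum>k<n. (if k = i then 1 else 0) * (if k = j then 1 else 0)) - (\<Sum>k<n. (if k = i then 1 else 0) * P j k)
            - (\<Sum>k<n. P i k * (if k = j then 1 else 0)) + (\<Sum>k<n. P i k * P j k)"
          by (simp add: algebra_simps sum.distrib sum_subtractf eq_commute[of i] eq_commute[of j])
        also have "\<dots> = (if i = j then 1 else 0) - P i j"
          using iT jT by (simp add: sum_delta_l sum_delta_r PP Psym[of j i])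
        finally have "(\<Sum>k<n. R i (p+k) * R j (p+k)) = (if i = j then 1 else 0) - P i j" .
        moreover have "(\<Sum>k<p. R i k * R j k) = P i j"
          using iT jT unfolding P_def by (intro sum.cong) (auto simp: R_def)
        ultimately show ?thesis using row by simp
      next
        case jF: False
        then obtain j' where j': "j = n + j'" "j' < p" using j by (metis add_less_cancel_left le_add_diff_inverse not_less)
        have "(\<Sum>k<p. R i k * R j k) = 0" using jF by (auto simp: R_def)
        moreover have "(\<Sum>k<n. R i (p+k) * R j (p+k)) = (\<Sum>k<n. ((if i = k then 1 else 0) - P i k) * V k j')"
          using iT jF j' by (intro sum.cong) (auto simp: R_def)
        moreover have "\<dots> = V i j' - V i j'"
          using iT j' by (simp add: algebra_simps sum_subtractf eq_commute[of i] sum_delta_l sum_delta_r PV)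
        ultimately show ?thesis using row iT jF by auto
      qed
    next
      case iF: False
      then obtain i' where i': "i = n + i'" "i' < p" using i by (metis add_less_cancel_left le_add_diff_inverse not_less)
      have Z: "(\<Sum>k<p. R i k * R j k) = 0" using iF by (auto simp: R_def)
      show ?thesis
      proof (cases "j < n")
        case jT: True
        have "(\<Sum>k<n. R i (p+k) * R j (p+k)) = (\<Sum>k<n. V k i' * ((if j = k then 1 else 0) - P j k))"
          using jT iF i' by (intro sum.cong) (auto simp: R_def)
        moreover have "\<dots> = V j i' - V j i'"
          using jT i' by (simp add: algebra_simps sum_subtractf eq_commute[of j] sum_delta_r PV)
        ultimately show ?thesis using row Z jT iF by auto
      next
        case jF: False
        then obtain j' where j': "j = n + j'" "j' < p" using j by (metis add_less_cancel_left le_add_diff_inverse not_less)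
        have "(\<Sum>k<n. R i (p+k) * R j (p+k)) = (\<Sum>k<n. V k i' * V k j')"
          using jF iF i' j' by (intro sum.cong) (auto simp: R_def)
        then show ?thesis using row Z iso i' j' by auto
      qed
    qed
  qed
  show "\<forall>i<n+p. \<forall>j<n+p. (\<Sum>k<n+p. R k i * R k j) = (if i=j then 1 else 0)"
  proof (intro allI impI)
    fix i j assume i: "i < n+p" and j: "j < n+p"
    have col: "(\<Sum>k<n+p. R k i * R k j) = (\<Sum>k<n. R k i * R k j) + (\<Sum>k<p. R (n+k) i * R (n+k) j)"
      by (rule split2)
    show "(\<Sum>k<n+p. R k i * R k j) = (if i=j then 1 else 0)"
    proof (cases "i < p")
      case iT: True
      have Z: "(\<Sum>k<p. R (n+k) i * R (n+k) j) = 0" using iT by (auto simp: R_def)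
      show ?thesis
      proof (cases "j < p")
        case jT: True
        have "(\<Sum>k<n. R k i * R k j) = (\<Sum>k<n. V k i * V k j)"
          using iT jT by (intro sum.cong) (auto simp: R_def)
        then show ?thesis using col Z iso iT jT by auto
      next
        case jF: False
        then obtain j' where j': "j = p + j'" "j' < n" using j by (metis add.commute add_less_cancel_left le_add_diff_inverse not_less)
        have "(\<Sum>k<n. R k i * R k j) = (\<Sum>k<n. V k i * ((if k = j' then 1 else 0) - P k j'))"
          using iT jF j' by (intro sum.cong) (auto simp: R_def)
        moreover have "\<dots> = V j' i - V j' i"
          using iT j' by (simp add: algebra_simps sum_subtractf sum_delta_r Psym[of _ j'] PV)
        ultimately show ?thesis using col Z iT jF by auto
      qed
    next
      case iF: False
      then obtain i' where i': "i = p + i'" "i' < n" using i by (metis add.commute add_less_cancel_left le_add_diff_inverse not_less)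
      show ?thesis
      proof (cases "j < p")
        case jT: True
        have Z: "(\<Sum>k<p. R (n+k) i * R (n+k) j) = 0" using jT by (auto simp: R_def)
        have "(\<Sum>k<n. R k i * R k j) = (\<Sum>k<n. ((if k = i' then 1 else 0) - P k i') * V k j)"
          using jT iF i' by (intro sum.cong) (auto simp: R_def)
        moreover have "\<dots> = V i' j - V i' j"
          using jT i' by (simp add: algebra_simps sum_subtractf sum_delta_l sum_delta_r Psym[of _ i'] PV)
        ultimately show ?thesis using col Z jT iF by auto
      next
        case jF: False
        then obtain j' where j': "j = p + j'" "j' < n" using j by (metis add.commute add_less_cancel_left le_add_diff_inverse not_less)
        have "(\<Sum>k<n. R k i * R k j) = (\<Sum>k<n. ((if k = i' then 1 else 0) - P k i') * ((if k = j' then 1 else 0) - P k j'))"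
          using iF jF i' j' by (intro sum.cong) (auto simp: R_def)
        also have "\<dots> = (\<Sum>k<n. (if k = i' then 1 else 0) * (if k = j' then 1 else 0)) - (\<Sum>k<n. (if k = i' then 1 else 0) * P k j')
            - (\<Sum>k<n. P k i' * (if k = j' then 1 else 0)) + (\<Sum>k<n. P i' k * P j' k)"
          by (simp add: algebra_simps sum.distrib sum_subtractf Psym)
        also have "\<dots> = (if i' = j' then 1 else 0) - P i' j'"
          using i' j' by (simp add: sum_delta_l sum_delta_r PP Psym[of j' i'])
        finally have A: "(\<Sum>k<n. R k i * R k j) = (if i' = j' then 1 else 0) - P i' j'" .
        have "(\<Sum>k<p. R (n+k) i * R (n+k) j) = P i' j'"
          using iF jF i' j' unfolding P_def by (intro sum.cong) (auto simp: R_def)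
        then show ?thesis using col A i' j' by auto
      qed
    qed
  qed
qed


lemma chol:
  "\<And>G::nat\<Rightarrow>nat\<Rightarrow>real. (\<forall>i<p. \<forall>j<p. G i j = G j i) \<Longrightarrow>
    (\<forall>x. (\<exists>i<p. x i \<noteq> 0) \<longrightarrow> (\<Sum>i<p. \<Sum>j<p. x i * G i j * x j) > 0) \<Longrightarrow>
    \<exists>v. \<forall>i<p. \<forall>j<p. (\<Sum>k<p. v i k * v j k) = G i j"
proof (induction p)
  case 0
  then show ?case by simp
next
  case (Suc p)
  note sym = Suc.prems(1) and pd = Suc.prems(2)
  define a where "a = G 0 0"
  define g where "g = (\<lambda>i. G 0 (Suc i))"
  define S where "S = (\<lambda>i j. G (Suc i) (Suc j) - g i * g j / a)"
  have a: "a > 0"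
  proof -
    have "(\<Sum>i<Suc p. \<Sum>j<Suc p. (if i = 0 then 1 else 0) * G i j * (if j = 0 then 1 else 0)) > 0"
      using pd[rule_format, of "\<lambda>i. if i = 0 then 1 else 0"] by auto
    then show ?thesis by (simp del: sum.lessThan_Suc add: sum.lessThan_Suc_shift a_def)
  qed
  have symS: "\<forall>i<p. \<forall>j<p. S i j = S j i" using sym by (auto simp: S_def g_def mult.commute)
  have pdS: "\<forall>x. (\<exists>i<p. x i \<noteq> 0) \<longrightarrow> (\<Sum>i<p. \<Sum>j<p. x i * S i j * x j) > 0"
  proof (intro allI impI)
    fix x :: "nat \<Rightarrow> real" assume nz: "\<exists>i<p. x i \<noteq> 0"
    define s where "s = (\<Sum>i<p. g i * x i)"
    define Q where "Q = (\<Sum>i<p. \<Sum>j<p. x i * G (Suc i) (Suc j) * x j)"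
    define z where "z = (\<lambda>i. if i = 0 then - s / a else x (i - 1))"
    obtain i0 where i0: "i0 < p" "x i0 \<noteq> 0" using nz by blast
    then have "Suc i0 < Suc p \<and> z (Suc i0) \<noteq> 0" by (simp add: z_def)
    then have "\<exists>i<Suc p. z i \<noteq> 0" by blast
    then have pos: "(\<Sum>i<Suc p. \<Sum>j<Suc p. z i * G i j * z j) > 0" using pd by blast
    have gsym: "G (Suc i) 0 = g i" if "i < p" for i using sym that by (auto simp: g_def)
    have F0: "(\<Sum>j<Suc p. z 0 * G 0 j * z j) = z 0 * a * z 0 + (\<Sum>j<p. z 0 * g j * x j)"
      by (simp only: sum.lessThan_Suc_shift) (simp add: z_def a_def g_def)
    have FS: "(\<Sum>j<Suc p. z (Suc i) * G (Suc i) j * z j) = x i * g i * z 0 + (\<Sum>j<p. x i * G (Suc i) (Suc j) * x j)"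
      if "i < p" for i
      by (simp only: sum.lessThan_Suc_shift) (simp add: z_def gsym that)
    have "(\<Sum>i<Suc p. \<Sum>j<Suc p. z i * G i j * z j)
        = (\<Sum>j<Suc p. z 0 * G 0 j * z j) + (\<Sum>i<p. \<Sum>j<Suc p. z (Suc i) * G (Suc i) j * z j)"
      by (simp only: sum.lessThan_Suc_shift)
    also have "\<dots> = z 0 * a * z 0 + (\<Sum>j<p. z 0 * g j * x j) + (\<Sum>i<p. x i * g i * z 0 + (\<Sum>j<p. x i * G (Suc i) (Suc j) * x j))"
      by (simp del: sum.lessThan_Suc add: F0 FS)
    also have "\<dots> = z 0 * a * z 0 + (\<Sum>j<p. z 0 * g j * x j) + (\<Sum>i<p. x i * g i * z 0) + Q"
      by (simp add: sum.distrib Q_def)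
    also have "\<dots> = z 0 * a * z 0 + 2 * (z 0 * s) + Q"
    proof -
      have "(\<Sum>j<p. z 0 * g j * x j) = z 0 * s" by (simp add: s_def sum_distrib_left mult.assoc)
      moreover have "(\<Sum>i<p. x i * g i * z 0) = z 0 * s" by (simp add: s_def sum_distrib_left mult_ac)
      ultimately show ?thesis by simp
    qed
    also have "\<dots> = Q - s * s / a" using a by (simp add: z_def field_simps)
    finally have e1: "(\<Sum>i<Suc p. \<Sum>j<Suc p. z i * G i j * z j) = Q - s * s / a" .
    have tm: "x i * S i j * x j = x i * G (Suc i) (Suc j) * x j - (g i * x i) * (g j * x j) / a" for i j
      by (simp add: S_def algebra_simps)
    have "(\<Sum>i<p. \<Sum>j<p. x i * S i j * x j) = Q - (\<Sum>i<p. \<Sum>j<p. (g i * x i) * (g j * x j) / a)"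
      by (simp only: tm sum_subtractf Q_def)
    also have "(\<Sum>i<p. \<Sum>j<p. (g i * x i) * (g j * x j) / a) = (\<Sum>i<p. (g i * x i) * s) / a"
      by (simp add: s_def sum_distrib_left sum_divide_distrib)
    also have "\<dots> = s * s / a" by (simp add: s_def sum_distrib_right)
    finally show "(\<Sum>i<p. \<Sum>j<p. x i * S i j * x j) > 0" using e1 pos by simp
  qed
  obtain w where w: "\<forall>i<p. \<forall>j<p. (\<Sum>k<p. w i k * w j k) = S i j"
    using Suc.IH[OF symS pdS] by blast
  define v where "v = (\<lambda>i k. if i = 0 then (if k = 0 then sqrt a else 0)
       else (if k = 0 then g (i - 1) / sqrt a else w (i - 1) (k - 1)))"
  have sa: "sqrt a * sqrt a = a" using a by simp
  show ?case
  proof (intro exI allI impI)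
    fix i j assume i: "i < Suc p" and j: "j < Suc p"
    show "(\<Sum>k<Suc p. v i k * v j k) = G i j"
    proof (cases i)
      case 0
      then show ?thesis
      proof (cases j)
        case 0
        then show ?thesis using \<open>i = 0\<close> sa by (simp del: sum.lessThan_Suc add: sum.lessThan_Suc_shift v_def a_def)
      next
        case (Suc j')
        then show ?thesis using \<open>i = 0\<close> a by (simp del: sum.lessThan_Suc add: sum.lessThan_Suc_shift v_def g_def)
      qed
    next
      case (Suc i')
      then show ?thesis
      proof (cases j)
        case 0
        then show ?thesis using Suc a sym i by (simp del: sum.lessThan_Suc add: sum.lessThan_Suc_shift v_def g_def)
      next
        case (Suc j')
        have "(\<Sum>k<Suc p. v i k * v j k) = g i' / sqrt a * (g j' / sqrt a) + (\<Sum>k<p. w i' k * w j' k)"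
          by (simp only: sum.lessThan_Suc_shift) (simp add: v_def Suc \<open>i = Suc i'\<close>)
        also have "\<dots> = g i' * g j' / a + S i' j'"
          using w i j Suc a \<open>i = Suc i'\<close> by (simp add: sa)
        finally show ?thesis using a Suc \<open>i = Suc i'\<close> by (simp del: sum.lessThan_Suc add: S_def)
      qed
    qed
  qed
qed


lemma real_unitary:
  fixes R :: "nat \<Rightarrow> nat \<Rightarrow> real"
  assumes "\<forall>i<N. \<forall>j<N. (\<Sum>k<N. R i k * R j k) = (if i=j then 1 else 0)"
    and "\<forall>i<N. \<forall>j<N. (\<Sum>k<N. R k i * R k j) = (if i=j then 1 else 0)"
  shows "unitary_fn N (\<lambda>i j. complex_of_real (R i j))"
proof -
  have e: "(\<Sum>k<N. complex_of_real (f k) * cnj (complex_of_real (g k))) = complex_of_real (\<Sum>k<N. f k * g k)"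
    for f g :: "nat \<Rightarrow> real" by simp
  have r1: "(\<Sum>k<N. complex_of_real (R i k) * cnj (complex_of_real (R j k))) = (if i = j then 1 else 0)"
    if "i < N" "j < N" for i j
    unfolding e using assms(1) that by simp
  have r2: "(\<Sum>k<N. cnj (complex_of_real (R k i)) * complex_of_real (R k j)) = (if i = j then 1 else 0)"
    if "i < N" "j < N" for i j
  proof -
    have "(\<Sum>k<N. cnj (complex_of_real (R k i)) * complex_of_real (R k j)) = (\<Sum>k<N. complex_of_real (R k i) * cnj (complex_of_real (R k j)))"
      by simp
    also have "\<dots> = (if i = j then 1 else 0)" unfolding e using assms(2) that by simp
    finally show ?thesis .
  qed
  show ?thesis unfolding unitary_fn_def using r1 r2 by blast
qed

lemma form_pos:
  fixes C :: "nat \<Rightarrow> nat \<Rightarrow> real" and x :: "nat \<Rightarrow> real" and p :: nat and c :: real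
  defines "K \<equiv> (\<Sum>k<p. \<Sum>i<p. (C k i)^2)"
  assumes nz: "\<exists>i<p. x i \<noteq> 0" and c: "c * K < 1" and c0: "c \<ge> 0"
  shows "(\<Sum>i<p. \<Sum>j<p. x i * ((if i = j then 1 else 0) - c * (\<Sum>k<p. C k i * C k j)) * x j) > 0"
proof -
  define X where "X = (\<Sum>i<p. (x i)^2)"
  have X: "X > 0"
  proof -
    obtain i0 where "i0 < p" "x i0 \<noteq> 0" using nz by blast
    then have "(x i0)^2 > 0" by simp
    moreover have "(x i0)^2 \<le> X" unfolding X_def
      using \<open>i0 < p\<close> by (intro member_le_sum) auto
    ultimately show ?thesis by linarith
  qed
  have t: "x i * ((if i = j then 1 else 0) - c * (\<Sum>k<p. C k i * C k j)) * x j
      = (if i = j then x i * x j else 0) - c * (\<Sum>k<p. (C k i * x i) * (C k j * x j))" for i j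
    by (simp add: sum_distrib_left sum_distrib_right algebra_simps)
  have "(\<Sum>i<p. \<Sum>j<p. x i * ((if i = j then 1 else 0) - c * (\<Sum>k<p. C k i * C k j)) * x j)
      = (\<Sum>i<p. \<Sum>j<p. (if i = j then x i * x j else 0)) - c * (\<Sum>i<p. \<Sum>j<p. \<Sum>k<p. (C k i * x i) * (C k j * x j))"
    by (simp only: t) (simp only: sum_subtractf sum_distrib_left)
  also have "(\<Sum>i<p. \<Sum>j<p. (if i = j then x i * x j else 0)) = X"
    by (simp add: X_def power2_eq_square)
  also have "(\<Sum>i<p. \<Sum>j<p. \<Sum>k<p. (C k i * x i) * (C k j * x j)) = (\<Sum>k<p. (\<Sum>i<p. C k i * x i)^2)"
  proof -
    have "(\<Sum>i<p. \<Sum>j<p. \<Sum>k<p. (C k i * x i) * (C k j * x j)) = (\<Sum>i<p. \<Sum>k<p. \<Sum>j<p. (C k i * x i) * (C k j * x j))"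
      by (rule sum.cong[OF refl], rule sum.swap)
    also have "\<dots> = (\<Sum>k<p. \<Sum>i<p. \<Sum>j<p. (C k i * x i) * (C k j * x j))"
      by (rule sum.swap)
    also have "\<dots> = (\<Sum>k<p. (\<Sum>i<p. C k i * x i)^2)"
      by (simp only: power2_eq_square sum_product)
    finally show ?thesis .
  qed
  finally have eq: "(\<Sum>i<p. \<Sum>j<p. x i * ((if i = j then 1 else 0) - c * (\<Sum>k<p. C k i * C k j)) * x j)
     = X - c * (\<Sum>k<p. (\<Sum>i<p. C k i * x i)^2)" .
  have "(\<Sum>k<p. (\<Sum>i<p. C k i * x i)^2) \<le> (\<Sum>k<p. (\<Sum>i<p. (C k i)^2) * X)"
    unfolding X_def by (intro sum_mono Cauchy_Schwarz_ineq_sum)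
  also have "\<dots> = K * X" by (simp add: K_def sum_distrib_right)
  finally have "c * (\<Sum>k<p. (\<Sum>i<p. C k i * x i)^2) \<le> c * (K * X)"
    using c0 by (rule mult_left_mono)
  then have "(\<Sum>i<p. \<Sum>j<p. x i * ((if i = j then 1 else 0) - c * (\<Sum>k<p. C k i * C k j)) * x j)
     \<ge> X - c * (K * X)" using eq by linarith
  moreover have "X - c * (K * X) > 0"
  proof -
    have "c * K * X < 1 * X" using c X by (intro mult_strict_right_mono) auto
    then show ?thesis by (simp add: algebra_simps)
  qed
  ultimately show ?thesis by linarith
qed


lemma dilation_ex:
  fixes V :: "nat \<Rightarrow> nat \<Rightarrow> real"
  assumes iso: "\<forall>a<p. \<forall>b<p. (\<Sum>k<n. V k a * V k b) = (if a = b then 1 else 0)"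
  shows "\<exists>R. (\<forall>i<n+p. \<forall>j<n+p. (\<Sum>k<n+p. R i k * R j k) = (if i=j then 1 else 0))
    \<and> (\<forall>i<n+p. \<forall>j<n+p. (\<Sum>k<n+p. R k i * R k j) = (if i=j then 1 else 0))
    \<and> (\<forall>i<n. \<forall>j<p. R i j = V i j)"
proof -
  define P where "P \<equiv> \<lambda>i j. \<Sum>l<p. V i l * V j l"
  define R where "R \<equiv> \<lambda>i j. if j < p then (if i < n then V i j else 0)
      else (if i < n then (if i = j - p then 1 else 0) - P i (j - p) else V (j - p) (i - n))"
  have "(\<forall>i<n+p. \<forall>j<n+p. (\<Sum>k<n+p. R i k * R j k) = (if i=j then 1 else 0))
    \<and> (\<forall>i<n+p. \<forall>j<n+p. (\<Sum>k<n+p. R k i * R k j) = (if i=j then 1 else 0))"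
    using dilation[OF iso] unfolding R_def P_def by blast
  moreover have "\<forall>i<n. \<forall>j<p. R i j = V i j" by (simp add: R_def)
  ultimately show ?thesis by blast
qed

theorem proposition2:
  fixes NT :: nat and At gt :: "nat \<Rightarrow> real" and r :: real
  assumes "NT \<ge> 1" and "r \<noteq> 0"
  shows "\<exists>\<gamma>::real. \<gamma> > 0 \<and> (\<exists>M :: nat \<Rightarrow> nat \<Rightarrow> complex.
           unitary_fn (NT + 2 + 2 * (NT + 2)) M \<and>
           (\<forall>j\<le>NT. M 0 j = complex_of_real (\<gamma> * At j)) \<and>
           (\<forall>k\<le>NT. \<forall>j\<le>NT. M (k + 1) j =
               (if j = k then 0 else complex_of_real (- r * (\<gamma> * At j)))) \<and>
           (\<forall>i\<le>NT + 1. M i (NT + 1) = complex_of_real (\<gamma> * gt i)))"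
proof -
  define p where "p = NT + 2"
  define C where "C = (\<lambda>i j. if j = NT + 1 then gt i else if i = 0 then At j
     else if i - 1 = j then 0 else - r * At j)"
  define K where "K = (\<Sum>k<p. \<Sum>i<p. (C k i)^2)"
  have K0: "K \<ge> 0" unfolding K_def by (intro sum_nonneg) auto
  define \<gamma> where "\<gamma> = 1 / sqrt (K + 1)"
  have gpos: "\<gamma> > 0" using K0 by (simp add: \<gamma>_def)
  define c where "c = \<gamma> * \<gamma>"
  have c: "c = 1 / (K + 1)" using K0 by (simp add: c_def \<gamma>_def)
  have c0: "c \<ge> 0" by (simp add: c_def)
  have cK: "c * K < 1" using K0 by (simp add: c field_simps)
  define G where "G = (\<lambda>i j. (if i = j then 1 else 0) - c * (\<Sum>k<p. C k i * C k j))"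
  have symG: "\<forall>i<p. \<forall>j<p. G i j = G j i" by (auto simp: G_def mult.commute)
  have pdG: "\<forall>x. (\<exists>i<p. x i \<noteq> 0) \<longrightarrow> (\<Sum>i<p. \<Sum>j<p. x i * G i j * x j) > 0"
    using form_pos[of p _ c C] cK c0 unfolding G_def K_def by blast
  obtain v where v: "\<forall>i<p. \<forall>j<p. (\<Sum>k<p. v i k * v j k) = G i j"
    using chol[OF symG pdG] by blast
  define V where "V = (\<lambda>i j. if i < p then \<gamma> * C i j else v j (i - p))"
  have iso: "\<forall>a<p. \<forall>b<p. (\<Sum>k<p+p. V k a * V k b) = (if a = b then 1 else 0)"
  proof (intro allI impI)
    fix a b assume a: "a < p" and b: "b < p"
    have "(\<Sum>k<p+p. V k a * V k b) = (\<Sum>k<p. V k a * V k b) + (\<Sum>k<p. V (p+k) a * V (p+k) b)"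
      by (rule sum_add_split)
    also have "(\<Sum>k<p. V k a * V k b) = c * (\<Sum>k<p. C k a * C k b)"
      by (simp add: V_def c_def sum_distrib_left mult_ac)
    also have "(\<Sum>k<p. V (p+k) a * V (p+k) b) = G a b"
      using v a b by (simp add: V_def)
    finally show "(\<Sum>k<p+p. V k a * V k b) = (if a = b then 1 else 0)" by (simp add: G_def)
  qed
  obtain R where R1: "\<forall>i<p+p+p. \<forall>j<p+p+p. (\<Sum>k<p+p+p. R i k * R j k) = (if i=j then 1 else 0)"
    and R2: "\<forall>i<p+p+p. \<forall>j<p+p+p. (\<Sum>k<p+p+p. R k i * R k j) = (if i=j then 1 else 0)"
    and R3: "\<forall>i<p+p. \<forall>j<p. R i j = V i j"
    using dilation_ex[OF iso] by blast
  have N: "NT + 2 + 2 * (NT + 2) = p + p + p" by (simp add: p_def)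
  have U: "unitary_fn (NT + 2 + 2 * (NT + 2)) (\<lambda>i j. complex_of_real (R i j))"
    unfolding N by (rule real_unitary[OF R1 R2])
  have E: "R i j = \<gamma> * C i j" if "i < p" "j < p" for i j
    using R3 that by (simp add: V_def)
  show ?thesis
  proof (intro exI conjI allI impI)
    show "\<gamma> > 0" by (rule gpos)
    show "unitary_fn (NT + 2 + 2 * (NT + 2)) (\<lambda>i j. complex_of_real (R i j))" by (rule U)
    fix j assume "j \<le> NT"
    then show "complex_of_real (R 0 j) = complex_of_real (\<gamma> * At j)"
      using E[of 0 j] by (simp add: p_def C_def)
  next
    fix k j assume "k \<le> NT" "j \<le> NT"
    then show "complex_of_real (R (k+1) j) = (if j = k then 0 else complex_of_real (- r * (\<gamma> * At j)))"
      using E[of "k+1" j] by (auto simp: p_def C_def)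
  next
    fix i assume "i \<le> NT + 1"
    then show "complex_of_real (R i (NT+1)) = complex_of_real (\<gamma> * gt i)"
      using E[of i "NT+1"] by (simp add: p_def C_def)
  qed
qed

end
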